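(* Let $G$ be a finite group of order $n$, and $X\subseteq G$ a non-empty proper subset of size $m$. If $m>n-\frac12-\sqrt{n-\frac34}$, then $X$ is $2$-generic in $G$. Hence if $m<\frac12+\sqrt{n-\frac34}$, then $X$ is not $2$-large in $G$.
   Context: For $X\subseteq G$: $X$ is $k$-large in $G$ if the intersection of any $k$ left translates $g_1X\cap\dots\cap g_kX$ ($g_i\in G$) is non-empty; $X$ is $k$-generic in $G$ if there are $g_1,\dots,g_k\in G$ with $G=\bigcup_{i\le k}g_iX$. *)

theory Defs
  imports Complex_Main "HOL-Algebra.Coset"
begin

definition k_large :: "('a, 'b) monoid_scheme \<Rightarrow> nat \<Rightarrow> 'a set \<Rightarrow> bool" where
  "k_large G k X \<longleftrightarrow>
     (\<forall>g. (\<forall>i<k. g i \<in> carrier G) \<longrightarrow> (\<Inter>i\<in>{..<k}. g i <#\<^bsub>G\<^esub> X) \<noteq> {})"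

definition k_generic :: "('a, 'b) monoid_scheme \<Rightarrow> nat \<Rightarrow> 'a set \<Rightarrow> bool" where
  "k_generic G k X \<longleftrightarrow>
     (\<exists>g. (\<forall>i<k. g i \<in> carrier G) \<and> carrier G = (\<Union>i\<in>{..<k}. g i <#\<^bsub>G\<^esub> X))"

end

theory Submission
  imports Defs
begin

lemma arith_aux:
  fixes k n :: nat
  assumes "k \<ge> 1" "real k < 1/2 + sqrt (real n - 3/4)"
  shows "k * k + 1 < n + k"
proof -
  have s: "real n - 3/4 > 0"
  proof (rule ccontr)
    assume "\<not> ?thesis"
    hence "sqrt (real n - 3/4) \<le> 0" by simp
    moreover have "real k \<ge> 1" using assms(1) by simp
    ultimately show False using assms(2) by linarith
  qed
  have a: "0 \<le> real k - 1/2" using assms by simp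
  have "(real k - 1/2)^2 < (sqrt (real n - 3/4))^2"
    using assms(2) a by (intro power_strict_mono) auto
  also have "\<dots> = real n - 3/4" using s by simp
  finally have "real k * real k + 1 < real n + real k" by (simp add: power2_eq_square algebra_simps)
  hence "real (k*k+1) < real (n+k)" by simp
  thus ?thesis by linarith
qed

lemma avoid:
  fixes G (structure)
  assumes "group G" "finite (carrier G)" "Y \<subseteq> carrier G"
    and "card Y * card Y + 1 < order G + card Y"
  shows "\<exists>g\<in>carrier G. (g <# Y) \<inter> Y = {}"
proof -
  interpret group G by fact
  have fY: "finite Y" using assms(2,3) finite_subset by blast
  define S where "S = insert \<one> ((\<lambda>(a,b). a \<otimes> inv b) ` (Y \<times> Y - Id))"
  have "card (Y \<times> Y - Id) = card Y * card Y - card Y"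
  proof -
    have "Y \<times> Y \<inter> Id = (\<lambda>y. (y,y)) ` Y" by auto
    hence c: "card (Y \<times> Y \<inter> Id) = card Y" by (simp add: card_image inj_on_def)
    have "card (Y \<times> Y - Id) = card (Y \<times> Y) - card (Y \<times> Y \<inter> Id)"
      using fY by (simp add: card_Diff_subset_Int)
    thus ?thesis using c by (simp add: card_cartesian_product)
  qed
  hence "card S \<le> 1 + (card Y * card Y - card Y)"
  proof -
    have "card S \<le> Suc (card ((\<lambda>(a,b). a \<otimes> inv b) ` (Y \<times> Y - Id)))"
      unfolding S_def using fY by (simp add: card_insert_if)
    also have "\<dots> \<le> Suc (card (Y \<times> Y - Id))"
      using fY by (simp add: card_image_le)
    finally show ?thesis using \<open>card (Y \<times> Y - Id) = _\<close> by simp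
  qed
  moreover have "card Y \<le> card Y * card Y" by (cases "card Y") auto
  ultimately have "card S < card (carrier G)" using assms(4) unfolding order_def
    by linarith
  have "\<not> carrier G \<subseteq> S"
  proof
    assume "carrier G \<subseteq> S"
    moreover have "finite S" unfolding S_def using fY by simp
    ultimately have "card (carrier G) \<le> card S" by (rule card_mono[rotated])
    thus False using \<open>card S < card (carrier G)\<close> by simp
  qed
  then obtain g where g: "g \<in> carrier G" "g \<notin> S" by blast
  have "(g <# Y) \<inter> Y = {}"
  proof (rule ccontr)
    assume "\<not> ?thesis"
    then obtain y y' where yy: "y \<in> Y" "y' \<in> Y" "g \<otimes> y = y'"
      unfolding l_coset_def by auto
    have yc: "y \<in> carrier G" "y' \<in> carrier G" using yy assms(3) by auto
    have "g = y' \<otimes> inv y" using yy yc g(1)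
      by (metis inv_solve_right)
    moreover have "y' \<noteq> y \<or> g = \<one>" using yy yc g(1) by (metis r_cancel_one')
    ultimately have "g \<in> S" unfolding S_def using yy by auto
    thus False using g by simp
  qed
  thus ?thesis using g by blast
qed

theorem theorem2p8:
  fixes G (structure) and X :: "'a set" and n m :: nat
  assumes "group G" and "finite (carrier G)" and "order G = n"
    and "X \<subseteq> carrier G" and "X \<noteq> {}" and "X \<noteq> carrier G" and "card X = m"
  shows "(real m > real n - 1/2 - sqrt (real n - 3/4) \<longrightarrow> k_generic G 2 X)
       \<and> (real m < 1/2 + sqrt (real n - 3/4) \<longrightarrow> \<not> k_large G 2 X)"
proof -
  interpret group G by fact
  have fX: "finite X" using assms(2,4) finite_subset by blast
  have two: "{..<2::nat} = {0,1}" by auto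
  have one: "\<one> <# X = X" using assms(4) by (rule lcos_mult_one)
  have P1: "k_generic G 2 X" if h: "real m > real n - 1/2 - sqrt (real n - 3/4)"
  proof -
    define Y where "Y = carrier G - X"
    have cY: "card Y = n - m" unfolding Y_def using assms fX
      by (simp add: card_Diff_subset order_def)
    have mn: "m \<le> n" using assms card_mono unfolding order_def by blast
    have "Y \<noteq> {}" unfolding Y_def using assms(4,6) by blast
    hence "card Y \<ge> 1" using assms(2) unfolding Y_def
      by (simp add: Suc_leI card_gt_0_iff)
    moreover have "real (card Y) < 1/2 + sqrt (real n - 3/4)" using cY mn h by simp
    ultimately have "card Y * card Y + 1 < n + card Y" by (rule arith_aux)
    then obtain g where g: "g \<in> carrier G" "(g <# Y) \<inter> Y = {}"
      using avoid[OF assms(1,2), of Y] assms(3) unfolding Y_def by auto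
    have cov: "carrier G = X \<union> (g <# X)"
    proof
      show "X \<union> (g <# X) \<subseteq> carrier G" using assms(4) g(1) l_coset_subset_G by auto
    next
      show "carrier G \<subseteq> X \<union> (g <# X)"
      proof
        fix z assume z: "z \<in> carrier G"
        show "z \<in> X \<union> (g <# X)"
        proof (rule ccontr)
          assume nz: "z \<notin> X \<union> (g <# X)"
          have e: "z = g \<otimes> (inv g \<otimes> z)" using z g(1) by (simp add: m_assoc[symmetric])
          have ic: "inv g \<otimes> z \<in> carrier G" using z g(1) by simp
          have "inv g \<otimes> z \<notin> X" using nz e unfolding l_coset_def by auto
          hence "inv g \<otimes> z \<in> Y" using ic Y_def by simp
          hence "z \<in> g <# Y" using e unfolding l_coset_def by auto
          moreover have "z \<in> Y" using nz z Y_def by simp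
          ultimately show False using g(2) by blast
        qed
      qed
    qed
    show ?thesis unfolding k_generic_def
      by (rule exI[of _ "\<lambda>i. if i = 0 then \<one> else g"]) (use g cov one two in auto)
  qed
  have P2: "\<not> k_large G 2 X" if h: "real m < 1/2 + sqrt (real n - 3/4)"
  proof -
    have "m \<ge> 1" using assms(5,7) fX card_0_eq by fastforce
    hence "m * m + 1 < n + m" using h by (rule arith_aux)
    then obtain g where g: "g \<in> carrier G" "(g <# X) \<inter> X = {}"
      using avoid[OF assms(1,2,4)] assms(3,7) by auto
    show ?thesis unfolding k_large_def
      apply (simp only: not_all not_imp)
      by (rule exI[of _ "\<lambda>i. if i = 0 then \<one> else g"]) (use g one two in auto)
  qed
  show ?thesis using P1 P2 by blast
qed

end
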